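(* Let $\Phi$ be a channel matrix whose rows $P^1,\dots,P^4\in\Delta^n$ are in general position, let $Q^0$ be the equidistant point from $P^1,\dots,P^4$ with barycentric coordinate $\boldsymbol\lambda^0$, and suppose $\lambda^0_1<0$, $\lambda^0_2<0$, $\lambda^0_3\ge0$, $\lambda^0_4\ge0$. Let $Q^{1(1)}=\pi(Q^0|L(P^2,P^3,P^4))$ and $Q^{1(2)}=\pi(Q^0|L(P^1,P^3,P^4))$ with barycentric coordinates $\boldsymbol\lambda^{1(1)},\boldsymbol\lambda^{1(2)}$ about $P^1,\dots,P^4$, and suppose $\lambda^{1(2)}_1<0$. Suppose further $\lambda^{1(1)}_2\ge0$, $\lambda^{1(1)}_3<0$, $\lambda^{1(1)}_4\ge0$, and let $Q^{2\dagger}=\pi(Q^0|L(P^2,P^4))$. Then the output distribution achieving the channel capacity is $Q^\ast=Q^{2\dagger}$ and the channel capacity is $C=D(P^2\|Q^{2\dagger})$.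
   Context: $\Delta^n=\{Q:Q_j>0,\sum_jQ_j=1\}$, $\bar\Delta^m=\{\boldsymbol\lambda:\lambda_i\ge0,\sum_i\lambda_i=1\}$; $D(Q\|Q')=\sum_jQ_j\log(Q_j/Q'_j)$. Rows are in general position if $P^2-P^1,\dots,P^m-P^1$ are linearly independent. $L(S^1,\dots,S^r)=\{\sum_i\lambda_iS^i:\sum_i\lambda_i=1\}\cap\Delta^n$; for such an affine subspace $L$, $\pi(Q'|L)$ is the unique $Q\in L$ minimizing $D(Q\|Q')$. The barycentric coordinate of $Q\in L(P^1,\dots,P^m)$ is the unique $\boldsymbol\lambda$ with $\sum_i\lambda_i=1$, $Q=\sum_i\lambda_iP^i$. The equidistant point is the unique $Q^0\in L(P^1,\dots,P^m)$ with all $D(P^i\|Q^0)$ equal. Mutual information $I(\boldsymbol\lambda,\Phi)=\sum_{i,j}\lambda_iP^i_j\log(P^i_j/Q_j)$ with $Q=\boldsymbol\lambda\Phi$; capacity $C=\max_{\boldsymbol\lambda\in\bar\Delta^m}I(\boldsymbol\lambda,\Phi)$; the capacity-achieving output distribution is $Q^\ast=\boldsymbol\lambda^\ast\Phi$ for a maximizer $\boldsymbol\lambda^\ast$ (unique). *)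

theory Defs
  imports "HOL-Analysis.Analysis"
begin

text \<open>Probability distributions on a finite output alphabet 'a (of size n) are
functions 'a => real. Channel rows P^1..P^m are P 1, ..., P m (indices are nat).\<close>

definition open_simplex :: "('a::finite \<Rightarrow> real) set" where
  "open_simplex = {Q. (\<forall>j. Q j > 0) \<and> (\<Sum>j\<in>UNIV. Q j) = 1}"

definition closed_simplex :: "nat \<Rightarrow> (nat \<Rightarrow> real) set" where
  "closed_simplex m = {l. (\<forall>i\<in>{1..m}. l i \<ge> 0) \<and> (\<Sum>i\<in>{1..m}. l i) = 1}"

definition KL :: "('a::finite \<Rightarrow> real) \<Rightarrow> ('a \<Rightarrow> real) \<Rightarrow> real" where
  "KL Q Q' = (\<Sum>j\<in>UNIV. Q j * ln (Q j / Q' j))"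

definition general_position :: "(nat \<Rightarrow> 'a::finite \<Rightarrow> real) \<Rightarrow> nat \<Rightarrow> bool" where
  "general_position P m \<longleftrightarrow>
     (\<forall>c::nat \<Rightarrow> real. (\<forall>j. (\<Sum>i\<in>{2..m}. c i * (P i j - P 1 j)) = 0)
        \<longrightarrow> (\<forall>i\<in>{2..m}. c i = 0))"

definition affL :: "(nat \<Rightarrow> 'a::finite \<Rightarrow> real) \<Rightarrow> nat set \<Rightarrow> ('a \<Rightarrow> real) set" where
  "affL P I = {Q. \<exists>l::nat \<Rightarrow> real. (\<Sum>i\<in>I. l i) = 1 \<and> Q = (\<lambda>j. \<Sum>i\<in>I. l i * P i j)}
              \<inter> open_simplex"

definition Iproj :: "('a::finite \<Rightarrow> real) set \<Rightarrow> ('a \<Rightarrow> real) \<Rightarrow> ('a \<Rightarrow> real)" where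
  "Iproj L Q' = (THE Q. Q \<in> L \<and> (\<forall>R\<in>L. KL Q Q' \<le> KL R Q'))"

text \<open>Barycentric coordinate of Q w.r.t. the rows indexed by I (zero outside I, for uniqueness).\<close>
definition bary :: "(nat \<Rightarrow> 'a::finite \<Rightarrow> real) \<Rightarrow> nat set \<Rightarrow> ('a \<Rightarrow> real) \<Rightarrow> (nat \<Rightarrow> real)" where
  "bary P I Q = (THE l. (\<forall>i. i \<notin> I \<longrightarrow> l i = 0) \<and> (\<Sum>i\<in>I. l i) = 1
                       \<and> Q = (\<lambda>j. \<Sum>i\<in>I. l i * P i j))"

definition equidistant :: "(nat \<Rightarrow> 'a::finite \<Rightarrow> real) \<Rightarrow> nat set \<Rightarrow> ('a \<Rightarrow> real)" where
  "equidistant P I = (THE Q. Q \<in> affL P I \<and> (\<forall>i\<in>I. \<forall>k\<in>I. KL (P i) Q = KL (P k) Q))"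

definition out_dist :: "(nat \<Rightarrow> 'a::finite \<Rightarrow> real) \<Rightarrow> nat \<Rightarrow> (nat \<Rightarrow> real) \<Rightarrow> ('a \<Rightarrow> real)" where
  "out_dist P m l = (\<lambda>j. \<Sum>i\<in>{1..m}. l i * P i j)"

definition mutual_info :: "(nat \<Rightarrow> 'a::finite \<Rightarrow> real) \<Rightarrow> nat \<Rightarrow> (nat \<Rightarrow> real) \<Rightarrow> real" where
  "mutual_info P m l = (\<Sum>i\<in>{1..m}. \<Sum>j\<in>UNIV. l i * P i j * ln (P i j / out_dist P m l j))"

definition capacity :: "(nat \<Rightarrow> 'a::finite \<Rightarrow> real) \<Rightarrow> nat \<Rightarrow> real" where
  "capacity P m = (SUP l\<in>closed_simplex m. mutual_info P m l)"

definition cap_output :: "(nat \<Rightarrow> 'a::finite \<Rightarrow> real) \<Rightarrow> nat \<Rightarrow> ('a \<Rightarrow> real)" where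
  "cap_output P m = (THE Q. \<exists>l\<in>closed_simplex m.
       mutual_info P m l = capacity P m \<and> Q = out_dist P m l)"

end

theory Submission
  imports Defs
begin

lemma xlnx_tendsto: "((\<lambda>x::real. x * ln x) \<longlongrightarrow> 0) (at_right 0)"
proof -
  have "((\<lambda>x. ln (inverse x) / inverse x) \<longlongrightarrow> 0) (at_right (0::real))"
    by (rule filterlim_compose[OF ln_x_over_x_tendsto_0 filterlim_inverse_at_top_right])
  then have 1: "((\<lambda>x. - (ln (inverse x) / inverse x)) \<longlongrightarrow> - 0) (at_right (0::real))"
    by (rule tendsto_minus)
  have 2: "\<forall>\<^sub>F x in at_right (0::real). - (ln (inverse x) / inverse x) = x * ln x"
    by (rule eventually_at_rightI[of 0 1]) (auto simp: ln_inverse divide_inverse)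
  show ?thesis using tendsto_cong[OF 2] 1 by simp
qed

lemma cont_xlnx: "continuous_on {0..} (\<lambda>x::real. x * ln x)"
proof -
  have "continuous (at x within {0..}) (\<lambda>x::real. x * ln x)" if "x \<ge> 0" for x
  proof (cases "x = 0")
    case True
    have "((\<lambda>x::real. x * ln x) \<longlongrightarrow> 0) (at 0 within {0..})"
      using xlnx_tendsto by (simp add: at_within_Ici_at_right)
    then show ?thesis using True by (simp add: continuous_within)
  next
    case False
    then have "isCont (\<lambda>x::real. x * ln x) x" using that by (intro continuous_intros) auto
    then show ?thesis by (rule continuous_at_imp_continuous_within)
  qed
  then show ?thesis by (simp add: continuous_on_eq_continuous_within)
qed
lemma ln_strict: assumes "(x::real) > 0" "x \<noteq> 1" shows "ln x < x - 1"
proof -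
  have s: "sqrt x > 0" using assms by simp
  have "ln x = 2 * ln (sqrt x)" using assms by (simp add: ln_sqrt)
  also have "\<dots> \<le> 2 * (sqrt x - 1)" using ln_le_minus_one[OF s] by simp
  also have "\<dots> < x - 1"
  proof -
    have "sqrt x \<noteq> 1" using assms by simp
    then have "(sqrt x - 1)^2 > 0" by simp
    then show ?thesis using assms by (simp add: power2_eq_square algebra_simps)
  qed
  finally show ?thesis .
qed

lemma ln_ge: assumes "(x::real) > 0" shows "1 - 1/x \<le> ln x"
  using ln_le_minus_one[of "1/x"] assms by (simp add: ln_div)

lemma term_ge: assumes "(a::real) \<ge> 0" "b > 0" shows "a - b \<le> a * ln a - a * ln b"
proof (cases "a = 0")
  case True then show ?thesis using assms by simp
next
  case False
  then have a: "a > 0" using assms by simp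
  have "1 - b/a \<le> ln (a/b)" using ln_ge[of "a/b"] a assms by simp
  then have "a * (1 - b/a) \<le> a * ln (a/b)" using a by (simp add: mult_left_mono)
  then show ?thesis using a assms by (simp add: ln_div algebra_simps)
qed

lemma term_strict: assumes "(a::real) > 0" "b > 0" "a \<noteq> b" shows "a - b < a * ln a - a * ln b"
proof -
  have "b/a > 0" "b/a \<noteq> 1" using assms by auto
  then have "ln (b/a) < b/a - 1" by (rule ln_strict)
  then have "a * ln (b/a) < a * (b/a - 1)" using assms by simp
  then show ?thesis using assms by (simp add: ln_div algebra_simps)
qed

lemma gibbs:
  fixes a b :: "'a::finite \<Rightarrow> real"
  assumes "\<forall>j. a j \<ge> 0" "\<forall>j. b j > 0" "sum a UNIV = sum b UNIV"
  shows "(\<Sum>j\<in>UNIV. a j * ln (b j)) \<le> (\<Sum>j\<in>UNIV. a j * ln (a j))"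
proof -
  have "(\<Sum>j\<in>UNIV. a j - b j) \<le> (\<Sum>j\<in>UNIV. a j * ln (a j) - a j * ln (b j))"
    by (rule sum_mono) (use assms term_ge in auto)
  then show ?thesis using assms(3) by (simp add: sum_subtractf)
qed

lemma KL_split:
  fixes a b :: "'a::finite \<Rightarrow> real"
  assumes "\<forall>j. a j \<ge> 0" "\<forall>j. b j > 0"
  shows "KL a b = (\<Sum>j\<in>UNIV. a j * ln (a j)) - (\<Sum>j\<in>UNIV. a j * ln (b j))"
proof -
  have "a j * ln (a j / b j) = a j * ln (a j) - a j * ln (b j)" for j
  proof (cases "a j = 0")
    case False
    then have "a j > 0" "b j > 0" using assms by (auto simp: order_le_less)
    then show ?thesis by (simp add: ln_div algebra_simps)
  qed simp
  then show ?thesis unfolding KL_def by (simp add: sum_subtractf)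
qed

lemma KL_nonneg:
  fixes a b :: "'a::finite \<Rightarrow> real"
  assumes "\<forall>j. a j \<ge> 0" "\<forall>j. b j > 0" "sum a UNIV = sum b UNIV"
  shows "KL a b \<ge> 0"
  using gibbs[OF assms] KL_split[OF assms(1,2)] by simp

lemma KL_self: "KL a a = 0"
proof -
  have "a j * ln (a j / a j) = 0" for j by (cases "a j = 0") auto
  then show ?thesis unfolding KL_def by (intro sum.neutral) blast
qed

lemma KL_zero:
  fixes a b :: "'a::finite \<Rightarrow> real"
  assumes "\<forall>j. a j > 0" "\<forall>j. b j > 0" "sum a UNIV = sum b UNIV" "KL a b = 0"
  shows "a = b"
proof (rule ccontr)
  assume "a \<noteq> b"
  then obtain j0 where j0: "a j0 \<noteq> b j0" by auto
  have "(\<Sum>j\<in>UNIV. a j - b j) < (\<Sum>j\<in>UNIV. a j * ln (a j) - a j * ln (b j))"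
  proof (rule sum_strict_mono_ex1)
    show "\<forall>x\<in>UNIV. a x - b x \<le> a x * ln (a x) - a x * ln (b x)"
      using assms term_ge less_imp_le by blast
    show "\<exists>x\<in>UNIV. a x - b x < a x * ln (a x) - a x * ln (b x)"
      using assms term_strict j0 by blast
  qed simp
  then have "0 < KL a b" using assms KL_split[of a b] by (simp add: sum_subtractf less_imp_le)
  then show False using assms by simp
qed

lemma chi2:
  fixes a b :: "'a::finite \<Rightarrow> real"
  assumes "\<forall>j. a j > 0" "\<forall>j. b j > 0" "sum a UNIV = sum b UNIV"
  shows "KL a b \<le> (\<Sum>j\<in>UNIV. (a j - b j)^2 / b j)"
proof -
  have "a j * ln (a j / b j) \<le> (a j - b j)^2 / b j + (a j - b j)" for j
  proof -
    have p: "a j / b j > 0" using assms by auto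
    have "a j * ln (a j / b j) \<le> a j * (a j / b j - 1)"
      using ln_le_minus_one[OF p] assms by (simp add: less_imp_le mult_left_mono)
    also have "\<dots> = (a j - b j)^2 / b j + (a j - b j)"
    proof -
      have "b j \<noteq> 0" using assms by (metis less_irrefl)
      then show ?thesis by (simp add: field_simps power2_eq_square)
    qed
    finally show ?thesis .
  qed
  then have "KL a b \<le> (\<Sum>j\<in>UNIV. (a j - b j)^2 / b j + (a j - b j))"
    unfolding KL_def by (rule sum_mono)
  also have "\<dots> = (\<Sum>j\<in>UNIV. (a j - b j)^2 / b j)"
    using assms(3) by (simp add: sum.distrib sum_subtractf)
  finally show ?thesis .
qed

definition Qm :: "(nat \<Rightarrow> 'a::finite \<Rightarrow> real) \<Rightarrow> nat set \<Rightarrow> (nat \<Rightarrow> real) \<Rightarrow> 'a \<Rightarrow> real" where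
  "Qm P I \<mu> = (\<lambda>j. \<Sum>i\<in>I. \<mu> i * P i j)"

definition cst :: "(nat \<Rightarrow> 'a::finite \<Rightarrow> real) \<Rightarrow> nat \<Rightarrow> real" where
  "cst P i = (\<Sum>j\<in>UNIV. P i j * ln (P i j))"

definition phi :: "(nat \<Rightarrow> 'a::finite \<Rightarrow> real) \<Rightarrow> nat set \<Rightarrow> (nat \<Rightarrow> real) \<Rightarrow> real" where
  "phi P I \<mu> = (\<Sum>i\<in>I. \<mu> i * cst P i) - (\<Sum>j\<in>UNIV. Qm P I \<mu> j * ln (Qm P I \<mu> j))"

lemma os_pos: "Q \<in> open_simplex \<Longrightarrow> Q j > 0"
  unfolding open_simplex_def by auto

lemma os_sum: "Q \<in> open_simplex \<Longrightarrow> sum Q UNIV = 1"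
  unfolding open_simplex_def by auto

lemma os_le1: assumes "Q \<in> open_simplex" shows "Q j \<le> 1"
proof -
  have "Q j \<le> sum Q UNIV"
    by (rule member_le_sum) (use os_pos[OF assms] less_imp_le in auto)
  then show ?thesis using os_sum[OF assms] by simp
qed

lemma Qm_cong: "(\<forall>i\<in>I. \<mu> i = \<nu> i) \<Longrightarrow> Qm P I \<mu> = Qm P I \<nu>"
  unfolding Qm_def by (auto intro!: sum.cong)

lemma phi_cong: "(\<forall>i\<in>I. \<mu> i = \<nu> i) \<Longrightarrow> phi P I \<mu> = phi P I \<nu>"
  unfolding phi_def using Qm_cong[of I \<mu> \<nu> P] by (auto intro!: sum.cong)

lemma sum_Qm:
  assumes "\<forall>i\<in>I. P i \<in> open_simplex"
  shows "sum (Qm P I \<mu>) UNIV = (\<Sum>i\<in>I. \<mu> i)"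
proof -
  have "sum (Qm P I \<mu>) UNIV = (\<Sum>i\<in>I. \<mu> i * (\<Sum>j\<in>UNIV. P i j))"
    unfolding Qm_def by (simp add: sum.swap[of _ UNIV] sum_distrib_left)
  also have "\<dots> = (\<Sum>i\<in>I. \<mu> i)"
    using assms os_sum by (metis (no_types, lifting) mult.right_neutral sum.cong)
  finally show ?thesis .
qed

lemma wsum_KL:
  assumes "\<forall>i\<in>I. P i \<in> open_simplex" "\<forall>j. R j > 0"
  shows "(\<Sum>i\<in>I. \<nu> i * KL (P i) R)
       = (\<Sum>i\<in>I. \<nu> i * cst P i) - (\<Sum>j\<in>UNIV. Qm P I \<nu> j * ln (R j))"
proof -
  have "KL (P i) R = cst P i - (\<Sum>j\<in>UNIV. P i j * ln (R j))" if "i \<in> I" for i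
    using KL_split[of "P i" R] assms that os_pos less_imp_le unfolding cst_def by blast
  then have "(\<Sum>i\<in>I. \<nu> i * KL (P i) R)
      = (\<Sum>i\<in>I. \<nu> i * cst P i - \<nu> i * (\<Sum>j\<in>UNIV. P i j * ln (R j)))"
    by (auto intro!: sum.cong simp: algebra_simps) (metis distrib_left)
  also have "\<dots> = (\<Sum>i\<in>I. \<nu> i * cst P i) - (\<Sum>i\<in>I. \<Sum>j\<in>UNIV. \<nu> i * P i j * ln (R j))"
    by (simp add: sum_subtractf sum_distrib_left mult.assoc)
  also have "(\<Sum>i\<in>I. \<Sum>j\<in>UNIV. \<nu> i * P i j * ln (R j)) = (\<Sum>j\<in>UNIV. Qm P I \<nu> j * ln (R j))"
    unfolding Qm_def by (simp add: sum.swap[of _ I] sum_distrib_right)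
  finally show ?thesis .
qed

lemma phi_id:
  assumes "\<forall>i\<in>I. P i \<in> open_simplex" "\<forall>j. R j > 0" "\<forall>j. Qm P I \<nu> j > 0"
  shows "phi P I \<nu> = (\<Sum>i\<in>I. \<nu> i * KL (P i) R) - KL (Qm P I \<nu>) R"
  using wsum_KL[OF assms(1,2), of \<nu>] KL_split[of "Qm P I \<nu>" R] assms(2,3)
  unfolding phi_def by (simp add: less_imp_le)

lemma tangent:
  assumes "\<forall>i\<in>I. P i \<in> open_simplex" "\<forall>j. R j > 0" "\<forall>j. Qm P I \<nu> j > 0"
  shows "(\<Sum>i\<in>I. \<nu> i * KL (P i) R)
       = (\<Sum>i\<in>I. \<nu> i * KL (P i) (Qm P I \<nu>)) + KL (Qm P I \<nu>) R"
  using phi_id[OF assms] phi_id[OF assms(1) assms(3) assms(3)] KL_self[of "Qm P I \<nu>"]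
  by simp

lemma sum_delta_mult:
  assumes "finite I" "k \<in> I"
  shows "(\<Sum>i\<in>I. (if i = k then c else 0) * x i) = c * (x k :: real)"
proof -
  have "(\<Sum>i\<in>I. (if i = k then c else 0) * x i) = (\<Sum>i\<in>I. if i = k then c * x k else 0)"
    by (rule sum.cong) auto
  then show ?thesis using assms by simp
qed

lemma lin_delta:
  assumes "finite I" "k \<in> I"
  shows "(\<Sum>i\<in>I. (a * f i + (if i = k then c else 0)) * x i) = a * (\<Sum>i\<in>I. f i * x i) + c * (x k :: real)"
  unfolding distrib_right sum.distrib sum_delta_mult[OF assms] by (simp add: sum_distrib_left mult.assoc)

lemma lin_delta2:
  assumes "finite I" "k \<in> I" "i \<in> I"
  shows "(\<Sum>l\<in>I. (f l + (if l = i then s else 0) + (if l = k then - s else 0)) * x l)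
     = (\<Sum>l\<in>I. f l * x l) + s * x i - s * (x k :: real)"
  unfolding distrib_right sum.distrib sum_delta_mult[OF assms(1,2)] sum_delta_mult[OF assms(1,3)] by simp

lemma exist_eq:
  fixes P :: "nat \<Rightarrow> 'a::finite \<Rightarrow> real" and m :: "'v::euclidean_space \<Rightarrow> nat \<Rightarrow> real"
  assumes fin: "finite I" and ne: "I \<noteq> {}" and Ppos: "\<forall>i\<in>I. P i \<in> open_simplex"
    and cont: "\<forall>i\<in>I. continuous_on UNIV (\<lambda>v. m v i)"
    and msurj: "\<forall>\<mu>. (\<Sum>i\<in>I. \<mu> i) = 1 \<longrightarrow> (\<exists>v. \<forall>i\<in>I. m v i = \<mu> i)"
    and msum: "\<forall>v. (\<Sum>i\<in>I. m v i) = 1"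
    and bnd: "bounded {v. \<forall>j. Qm P I (m v) j \<ge> 0}"
  shows "\<exists>\<mu>. (\<Sum>i\<in>I. \<mu> i) = 1 \<and> Qm P I \<mu> \<in> open_simplex
              \<and> (\<forall>i\<in>I. \<forall>k\<in>I. KL (P i) (Qm P I \<mu>) = KL (P k) (Qm P I \<mu>))"
proof -
  define K where "K = {v. \<forall>j. Qm P I (m v) j \<ge> 0}"
  have contQ: "continuous_on UNIV (\<lambda>v. Qm P I (m v) j)" for j
    unfolding Qm_def
    by (rule continuous_on_sum, rule continuous_on_mult_right) (use cont in blast)
  have "closed K"
    unfolding K_def
  proof (rule closed_Collect_all)
    fix j show "closed {v. 0 \<le> Qm P I (m v) j}"
      by (rule closed_Collect_le[OF continuous_on_const contQ])
  qed
  then have "compact K" using bnd unfolding K_def[symmetric] by (simp add: compact_eq_bounded_closed)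
  obtain i0 where i0: "i0 \<in> I" using ne by blast
  have "(\<Sum>i\<in>I. (if i = i0 then 1 else 0::real)) = 1" using fin i0 by simp
  then obtain v0 where v0: "\<forall>i\<in>I. m v0 i = (if i = i0 then 1 else 0)" using msurj by blast
  have "Qm P I (m v0) = P i0"
  proof -
    have e: "(if i = i0 then 1 else 0) * x = (if i = i0 then x else (0::real))" for i x by simp
    show ?thesis
      using Qm_cong[OF v0, of P] fin i0 unfolding Qm_def by (simp add: e fun_eq_iff)
  qed
  moreover have "\<forall>j. P i0 j \<ge> 0" using Ppos i0 os_pos less_imp_le by blast
  ultimately have "v0 \<in> K" unfolding K_def by simp
  then have Kne: "K \<noteq> {}" by blast
  have "continuous_on K (\<lambda>v. phi P I (m v))"
  proof -
    have c1: "continuous_on K (\<lambda>v. Qm P I (m v) j * ln (Qm P I (m v) j))" for j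
      using continuous_on_compose2[OF cont_xlnx continuous_on_subset[OF contQ[of j]], of K]
      unfolding K_def by auto
    have c2: "continuous_on K (\<lambda>v. m v i * cst P i)" if "i \<in> I" for i
      by (rule continuous_on_mult_right, rule continuous_on_subset[of UNIV]) (use cont that in auto)
    show ?thesis unfolding phi_def
      by (intro continuous_on_diff continuous_on_sum c1 c2)
  qed
  then obtain vs where vsK: "vs \<in> K" and vsmax: "\<forall>v\<in>K. phi P I (m v) \<le> phi P I (m vs)"
    using continuous_attains_sup[OF \<open>compact K\<close> Kne] by blast
  define \<mu>s where "\<mu>s = m vs"
  define Qs where "Qs = Qm P I \<mu>s"
  have lift: "phi P I \<mu> \<le> phi P I \<mu>s"
    if h: "(\<Sum>i\<in>I. \<mu> i) = 1" "\<forall>j. Qm P I \<mu> j \<ge> 0" for \<mu>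
  proof -
    obtain v where v: "\<forall>i\<in>I. m v i = \<mu> i" using msurj h(1) by blast
    have "Qm P I (m v) = Qm P I \<mu>" by (rule Qm_cong[OF v])
    then have "v \<in> K" unfolding K_def using h(2) by simp
    then show ?thesis using vsmax phi_cong[OF v] unfolding \<mu>s_def by metis
  qed
  have s1: "(\<Sum>i\<in>I. \<mu>s i) = 1" unfolding \<mu>s_def using msum by blast
  have sQ: "sum Qs UNIV = 1" unfolding Qs_def using sum_Qm[OF Ppos] s1 by simp
  have Qnn: "\<forall>j. Qs j \<ge> 0" using vsK unfolding K_def Qs_def \<mu>s_def by blast
  have Qpos: "\<forall>j. Qs j > 0"
  proof (rule ccontr)
    assume "\<not> (\<forall>j. Qs j > 0)"
    then obtain j0 where j0: "Qs j0 = 0" using Qnn by (metis order_le_less)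
    define k where "k = i0"
    have k: "k \<in> I" using i0 k_def by simp
    define p where "p = P k j0"
    have p: "p > 0" "p \<le> 1" unfolding p_def using os_pos[of "P k" j0] os_le1[of "P k" j0] Ppos k by auto
    define A where "A = (\<Sum>i\<in>I. \<mu>s i * cst P i)"
    define S where "S = (\<Sum>j\<in>UNIV. Qs j * ln (Qs j))"
    define M where "M = A - S - cst P k"
    define t where "t = exp (- (\<bar>M\<bar> + 1) / p)"
    have t: "t > 0" "t < 1"
    proof -
      have "- (\<bar>M\<bar> + 1) / p < 0" using p by (intro divide_neg_pos) auto
      then show "t > 0" "t < 1" unfolding t_def by auto
    qed
    have lnt: "ln t = - (\<bar>M\<bar> + 1) / p" unfolding t_def by simp
    define \<mu>t where "\<mu>t = (\<lambda>i. (1 - t) * \<mu>s i + (if i = k then t else 0))"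
    have st: "(\<Sum>i\<in>I. \<mu>t i) = 1"
      unfolding \<mu>t_def using s1 fin k by (simp add: sum.distrib sum_distrib_left[symmetric])
    define Qt where "Qt = Qm P I \<mu>t"
    have Qt: "Qt j = (1 - t) * Qs j + t * P k j" for j
      unfolding Qt_def Qs_def Qm_def \<mu>t_def using lin_delta[OF fin k] by simp
    have Qtpos: "Qt j > 0" for j
      using Qt[of j] Qnn t Ppos k os_pos
      by (smt (verit, best) mult_nonneg_nonneg mult_pos_pos)
    have sQt: "sum Qt UNIV = 1" unfolding Qt_def using sum_Qm[OF Ppos] st by simp
    have Qtle: "Qt j \<le> 1" for j
    proof -
      have "Qt j \<le> sum Qt UNIV" by (rule member_le_sum) (use Qtpos less_imp_le in auto)
      then show ?thesis using sQt by simp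
    qed
    have phit: "phi P I \<mu>t = (1 - t) * A + t * cst P k - (\<Sum>j\<in>UNIV. Qt j * ln (Qt j))"
    proof -
      have "(\<Sum>i\<in>I. \<mu>t i * cst P i) = (1 - t) * A + t * cst P k"
        unfolding \<mu>t_def A_def using lin_delta[OF fin k] by simp
      then show ?thesis unfolding phi_def Qt_def by simp
    qed
    have e1: "Qt j * ln (Qt j) = (1 - t) * (Qs j * ln (Qt j)) + t * P k j * ln (Qt j)" for j
    proof -
      have "Qt j * ln (Qt j) = ((1 - t) * Qs j + t * P k j) * ln (Qt j)" by (metis Qt)
      then show ?thesis by (simp add: algebra_simps)
    qed
    have g: "(\<Sum>j\<in>UNIV. Qs j * ln (Qt j)) \<le> S"
      unfolding S_def by (rule gibbs) (use Qnn Qtpos sQ sQt in auto)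
    have h: "(\<Sum>j\<in>UNIV. t * P k j * ln (Qt j)) \<le> t * p * ln t"
    proof -
      have "(\<Sum>j\<in>UNIV. t * P k j * ln (Qt j))
          = t * P k j0 * ln (Qt j0) + (\<Sum>j\<in>UNIV - {j0}. t * P k j * ln (Qt j))"
        by (simp add: sum.remove)
      also have "(\<Sum>j\<in>UNIV - {j0}. t * P k j * ln (Qt j)) \<le> 0"
      proof (rule sum_nonpos)
        fix j
        have "ln (Qt j) \<le> 0" using Qtle[of j] Qtpos[of j] by simp
        moreover have "t * P k j \<ge> 0" using t Ppos k os_pos less_imp_le by (metis mult_nonneg_nonneg)
        ultimately show "t * P k j * ln (Qt j) \<le> 0" by (simp add: mult_nonneg_nonpos)
      qed
      also have "Qt j0 = t * p" using Qt[of j0] j0 p_def by simp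
      also have "ln (t * p) \<le> ln t" using t p by simp
      then have "t * P k j0 * ln (t * p) \<le> t * p * ln t"
        using t p unfolding p_def by (simp add: mult_left_mono)
      finally show ?thesis by simp
    qed
    have "(\<Sum>j\<in>UNIV. Qt j * ln (Qt j)) \<le> (1 - t) * S + t * p * ln t"
    proof -
      have "(\<Sum>j\<in>UNIV. Qt j * ln (Qt j))
          = (1 - t) * (\<Sum>j\<in>UNIV. Qs j * ln (Qt j)) + (\<Sum>j\<in>UNIV. t * P k j * ln (Qt j))"
        unfolding e1 by (simp add: sum.distrib sum_distrib_left)
      also have "\<dots> \<le> (1 - t) * S + t * p * ln t"
        using g h t by (smt (verit) mult_left_mono)
      finally show ?thesis .
    qed
    then have "phi P I \<mu>t \<ge> (1 - t) * A + t * cst P k - (1 - t) * S - t * p * ln t"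
      using phit by simp
    moreover have "phi P I \<mu>s = A - S" unfolding phi_def A_def S_def Qs_def by simp
    moreover have "t * p * ln t = - t * (\<bar>M\<bar> + 1)"
    proof -
      have pl: "p * ln t = - (\<bar>M\<bar> + 1)" using lnt p by (simp add: field_simps)
      show ?thesis using pl by (metis mult.assoc mult_minus_right mult_minus_left)
    qed
    ultimately have "phi P I \<mu>t - phi P I \<mu>s \<ge> t * (\<bar>M\<bar> + 1 - M)"
      unfolding M_def by (simp add: algebra_simps)
    moreover have "t * (\<bar>M\<bar> + 1 - M) > 0" using t by simp
    moreover have "phi P I \<mu>t \<le> phi P I \<mu>s"
      by (rule lift) (use st Qtpos less_imp_le in \<open>auto simp: Qt_def\<close>)
    ultimately show False by simp
  qed
  have stat: "KL (P i) Qs \<le> KL (P k) Qs" if ik: "i \<in> I" "k \<in> I" for i k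
  proof (cases "i = k")
    case True then show ?thesis by simp
  next
    case False
    define d where "d = KL (P i) Qs - KL (P k) Qs"
    define \<delta> where "\<delta> = Min (range Qs)"
    have \<delta>: "\<delta> > 0" "\<forall>j. \<delta> \<le> Qs j" unfolding \<delta>_def using Qpos by auto
    define M where "M = (\<Sum>j\<in>UNIV. (P i j - P k j)^2 / Qs j)"
    have M: "M \<ge> 0" unfolding M_def using Qpos by (auto intro!: sum_nonneg simp: less_imp_le)
    have key: "d \<le> s * M" if s: "s > 0" "s \<le> \<delta> / 2" for s
    proof -
      define \<mu>' where "\<mu>' = (\<lambda>l. \<mu>s l + (if l = i then s else 0) + (if l = k then - s else 0))"
      have s': "(\<Sum>l\<in>I. \<mu>' l) = 1"
        unfolding \<mu>'_def using s1 fin ik by (simp add: sum.distrib sum_subtractf)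
      define Q' where "Q' = Qm P I \<mu>'"
      have Q': "Q' j = Qs j + s * (P i j - P k j)" for j
        unfolding Q'_def Qs_def Qm_def \<mu>'_def using lin_delta2[OF fin ik(2) ik(1)]
        by (simp add: algebra_simps)
      have Q'pos: "Q' j > 0" for j
      proof -
        have "P i j > 0" "P k j \<le> 1" using Ppos ik os_pos[of "P i" j] os_le1[of "P k" j] by auto
        then have "P i j - P k j \<ge> -1" by simp
        then have "s * (-1) \<le> s * (P i j - P k j)" using s by (intro mult_left_mono) auto
        moreover have "\<delta> \<le> Qs j" using \<delta> by blast
        ultimately show ?thesis using Q'[of j] s by linarith
      qed
      have sQ': "sum Q' UNIV = 1" unfolding Q'_def using sum_Qm[OF Ppos] s' by simp
      have le: "phi P I \<mu>' \<le> phi P I \<mu>s"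
        by (rule lift) (use s' Q'pos less_imp_le in \<open>auto simp: Q'_def\<close>)
      have eq1: "phi P I \<mu>' = (\<Sum>l\<in>I. \<mu>' l * KL (P l) Qs) - KL Q' Qs"
        unfolding Q'_def by (rule phi_id) (use Ppos Qpos Q'pos in \<open>auto simp: Q'_def\<close>)
      have eq2: "phi P I \<mu>s = (\<Sum>l\<in>I. \<mu>s l * KL (P l) Qs)"
        using phi_id[OF Ppos Qpos, of \<mu>s] Qpos KL_self[of Qs] unfolding Qs_def by simp
      have eq3: "(\<Sum>l\<in>I. \<mu>' l * KL (P l) Qs) = (\<Sum>l\<in>I. \<mu>s l * KL (P l) Qs) + s * d"
        unfolding \<mu>'_def d_def using lin_delta2[OF fin ik(2) ik(1)]
        by (simp add: algebra_simps)
      have "KL Q' Qs \<le> (\<Sum>j\<in>UNIV. (Q' j - Qs j)^2 / Qs j)"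
        by (rule chi2) (use Q'pos Qpos sQ' sQ in auto)
      also have "\<dots> = s^2 * M"
        unfolding M_def Q' by (simp add: sum_distrib_left power_mult_distrib)
      finally have "s * d \<le> s^2 * M" using le eq1 eq2 eq3 by simp
      then show ?thesis using s by (simp add: power2_eq_square)
    qed
    show ?thesis
    proof (rule ccontr)
      assume "\<not> ?thesis"
      then have dpos: "d > 0" unfolding d_def by simp
      define s where "s = min (\<delta> / 2) (d / (M + 1))"
      have "s > 0" unfolding s_def using \<delta> dpos M by auto
      moreover have "s \<le> \<delta> / 2" unfolding s_def by (rule min.cobounded1)
      ultimately have "d \<le> s * M" by (rule key)
      moreover have "s * M \<le> d / (M + 1) * M"
        unfolding s_def using M by (intro mult_right_mono min.cobounded2) auto
      moreover have "d / (M + 1) * M < d" using M dpos by (simp add: field_simps)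
      ultimately show False by simp
    qed
  qed
  show ?thesis
  proof (intro exI conjI)
    show "(\<Sum>i\<in>I. \<mu>s i) = 1" by (rule s1)
    show "Qm P I \<mu>s \<in> open_simplex" unfolding open_simplex_def using Qpos sQ Qs_def by auto
    show "\<forall>i\<in>I. \<forall>k\<in>I. KL (P i) (Qm P I \<mu>s) = KL (P k) (Qm P I \<mu>s)"
      using stat unfolding Qs_def by (meson order_antisym)
  qed
qed

lemma I24: "{2..4::nat} = {2,3,4}" by auto
lemma I14: "{1..4::nat} = {1,2,3,4}" by auto

lemma gp_alt:
  fixes c :: "nat \<Rightarrow> real"
  assumes "general_position P 4"
    and "\<forall>j. c 2 * (P 2 j - P 1 j) + c 3 * (P 3 j - P 1 j) + c 4 * (P 4 j - P 1 j) = 0"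
  shows "c 2 = 0 \<and> c 3 = 0 \<and> c 4 = (0::real)"
proof -
  have "\<forall>j. (\<Sum>i\<in>{2..4}. c i * (P i j - P 1 j)) = 0" using assms(2) unfolding I24 by (simp add: add.assoc)
  then have "\<forall>i\<in>{2..4}. c i = 0" using assms(1) unfolding general_position_def by blast
  then show ?thesis unfolding I24 by simp
qed

lemma bounded_lin:
  fixes L :: "'v::euclidean_space \<Rightarrow> 'a::finite \<Rightarrow> real"
  assumes add: "\<And>u w j. L (u + w) j = L u j + L w j"
    and sc: "\<And>r u j. L (r *\<^sub>R u) j = r * L u j"
    and ker: "\<And>v. (\<forall>j. L v j = 0) \<Longrightarrow> v = 0"
  shows "bounded {v. \<forall>j. \<bar>L v j\<bar> \<le> C}"
proof -
  define f :: "'v \<Rightarrow> real^'a" where "f v = (\<chi> j. L v j)" for v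
  have "linear f"
    by (rule linearI) (simp_all add: f_def vec_eq_iff add sc)
  moreover have "inj f"
  proof (rule injI)
    fix u w assume "f u = f w"
    then have e: "\<forall>j. L u j = L w j" by (simp add: f_def vec_eq_iff)
    have "\<forall>j. L (u - w) j = 0"
    proof
      fix j
      have "L u j = L (u - w) j + L w j" using add[of "u - w" w j] by simp
      then show "L (u - w) j = 0" using e by simp
    qed
    then show "u = w" using ker[of "u - w"] by simp
  qed
  ultimately obtain B where B: "B > 0" "\<And>x. B * norm x \<le> norm (f x)"
    using linear_inj_bounded_below_pos by blast
  show ?thesis unfolding bounded_iff
  proof (intro exI ballI)
    fix v assume v: "v \<in> {v. \<forall>j. \<bar>L v j\<bar> \<le> C}"
    have "norm (f v) \<le> (\<Sum>j\<in>UNIV. \<bar>f v $ j\<bar>)" by (rule norm_le_l1_cart)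
    also have "\<dots> \<le> (\<Sum>j\<in>(UNIV::'a set). C)"
      by (rule sum_mono) (use v in \<open>simp add: f_def\<close>)
    finally have "B * norm v \<le> CARD('a) * C" using B(2)[of v] by simp
    then show "norm v \<le> CARD('a) * C / B" using B(1) by (simp add: field_simps)
  qed
qed

lemma Qm_le1:
  assumes "\<forall>i\<in>I. P i \<in> open_simplex" "(\<Sum>i\<in>I. \<mu> i) = 1" "\<forall>j. Qm P I \<mu> j \<ge> 0"
  shows "Qm P I \<mu> j \<le> 1"
proof -
  have "Qm P I \<mu> j \<le> sum (Qm P I \<mu>) UNIV" by (rule member_le_sum) (use assms in auto)
  then show ?thesis using sum_Qm[OF assms(1)] assms(2) by simp
qed

lemma exist4:
  fixes P :: "nat \<Rightarrow> 'a::finite \<Rightarrow> real"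
  assumes Ppos: "\<forall>i\<in>{1,2,3,4}. P i \<in> open_simplex" and gp: "general_position P 4"
  shows "\<exists>\<mu>. (\<Sum>i\<in>{1,2,3,4}. \<mu> i) = 1 \<and> Qm P {1,2,3,4} \<mu> \<in> open_simplex
    \<and> (\<forall>i\<in>{1,2,3,4}. \<forall>k\<in>{1,2,3,4}. KL (P i) (Qm P {1,2,3,4} \<mu>) = KL (P k) (Qm P {1,2,3,4} \<mu>))"
proof (rule exist_eq)
  define m :: "real \<times> real \<times> real \<Rightarrow> nat \<Rightarrow> real" where
    "m v i = (if i = 1 then 1 - fst v - fst (snd v) - snd (snd v) else if i = 2 then fst v
       else if i = 3 then fst (snd v) else if i = 4 then snd (snd v) else 0)" for v i
  show "\<forall>i\<in>{1,2,3,4}. continuous_on UNIV (\<lambda>v. m v i)"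
    unfolding m_def by (auto intro!: continuous_intros)
  show "\<forall>\<mu>. (\<Sum>i\<in>{1,2,3,4}. \<mu> i) = 1 \<longrightarrow> (\<exists>v. \<forall>i\<in>{1,2,3,4}. m v i = \<mu> i)"
  proof (intro allI impI)
    fix \<mu> :: "nat \<Rightarrow> real" assume "(\<Sum>i\<in>{1,2,3,4}. \<mu> i) = 1"
    then show "\<exists>v. \<forall>i\<in>{1,2,3,4}. m v i = \<mu> i"
      by (intro exI[of _ "(\<mu> 2, \<mu> 3, \<mu> 4)"]) (auto simp: m_def)
  qed
  show "\<forall>v. (\<Sum>i\<in>{1,2,3,4}. m v i) = 1" by (simp add: m_def)
  define L where "L v j = fst v * (P 2 j - P 1 j) + fst (snd v) * (P 3 j - P 1 j)
     + snd (snd v) * (P 4 j - P 1 j)" for v :: "real \<times> real \<times> real" and j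
  have QL: "Qm P {1,2,3,4} (m v) j = P 1 j + L v j" for v j
    by (simp add: Qm_def m_def L_def algebra_simps)
  have "bounded {v. \<forall>j. \<bar>L v j\<bar> \<le> 1}"
  proof (rule bounded_lin)
    show "L (u + w) j = L u j + L w j" for u w j by (simp add: L_def algebra_simps)
    show "L (r *\<^sub>R u) j = r * L u j" for r u j by (simp add: L_def algebra_simps)
    show "v = 0" if "\<forall>j. L v j = 0" for v
    proof -
      define c :: "nat \<Rightarrow> real" where "c i = (if i = 2 then fst v else if i = 3 then fst (snd v) else snd (snd v))" for i
      have "\<forall>j. c 2 * (P 2 j - P 1 j) + c 3 * (P 3 j - P 1 j) + c 4 * (P 4 j - P 1 j) = 0"
        using that by (simp add: L_def c_def)
      from gp_alt[OF gp this] show ?thesis by (simp add: prod_eq_iff c_def)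
    qed
  qed
  moreover have "{v. \<forall>j. Qm P {1,2,3,4} (m v) j \<ge> 0} \<subseteq> {v. \<forall>j. \<bar>L v j\<bar> \<le> 1}"
  proof (safe)
    fix v j assume h: "\<forall>j. Qm P {1,2,3,4} (m v) j \<ge> 0"
    have "Qm P {1,2,3,4} (m v) j \<le> 1"
      by (rule Qm_le1) (use Ppos h in \<open>auto simp: m_def\<close>)
    moreover have "P 1 j > 0" "P 1 j \<le> 1" using Ppos os_pos os_le1 by auto
    ultimately show "\<bar>L v j\<bar> \<le> 1" using QL[of v j] spec[OF h, of j] by (auto simp: abs_le_iff)
  qed
  ultimately show "bounded {v. \<forall>j. Qm P {1,2,3,4} (m v) j \<ge> 0}" by (rule bounded_subset)
qed (use Ppos in auto)


lemma exist3:
  fixes P :: "nat \<Rightarrow> 'a::finite \<Rightarrow> real"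
  assumes Ppos: "\<forall>i\<in>{2,3,4}. P i \<in> open_simplex" and gp: "general_position P 4"
  shows "\<exists>\<mu>. (\<Sum>i\<in>{2,3,4}. \<mu> i) = 1 \<and> Qm P {2,3,4} \<mu> \<in> open_simplex
    \<and> (\<forall>i\<in>{2,3,4}. \<forall>k\<in>{2,3,4}. KL (P i) (Qm P {2,3,4} \<mu>) = KL (P k) (Qm P {2,3,4} \<mu>))"
proof (rule exist_eq)
  define m :: "real \<times> real \<Rightarrow> nat \<Rightarrow> real" where
    "m v i = (if i = 2 then 1 - fst v - snd v else if i = 3 then fst v
       else if i = 4 then snd v else 0)" for v i
  show "\<forall>i\<in>{2,3,4}. continuous_on UNIV (\<lambda>v. m v i)"
    unfolding m_def by (auto intro!: continuous_intros)
  show "\<forall>\<mu>. (\<Sum>i\<in>{2,3,4}. \<mu> i) = 1 \<longrightarrow> (\<exists>v. \<forall>i\<in>{2,3,4}. m v i = \<mu> i)"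
  proof (intro allI impI)
    fix \<mu> :: "nat \<Rightarrow> real" assume "(\<Sum>i\<in>{2,3,4}. \<mu> i) = 1"
    then show "\<exists>v. \<forall>i\<in>{2,3,4}. m v i = \<mu> i"
      by (intro exI[of _ "(\<mu> 3, \<mu> 4)"]) (auto simp: m_def)
  qed
  show "\<forall>v. (\<Sum>i\<in>{2,3,4}. m v i) = 1" by (simp add: m_def)
  define L where "L v j = fst v * (P 3 j - P 2 j) + snd v * (P 4 j - P 2 j)" for v :: "real \<times> real" and j
  have QL: "Qm P {2,3,4} (m v) j = P 2 j + L v j" for v j
    by (simp add: Qm_def m_def L_def algebra_simps)
  have "bounded {v. \<forall>j. \<bar>L v j\<bar> \<le> 1}"
  proof (rule bounded_lin)
    show "L (u + w) j = L u j + L w j" for u w j by (simp add: L_def algebra_simps)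
    show "L (r *\<^sub>R u) j = r * L u j" for r u j by (simp add: L_def algebra_simps)
    show "v = 0" if "\<forall>j. L v j = 0" for v
    proof -
      define c :: "nat \<Rightarrow> real" where "c i = (if i = 2 then - fst v - snd v else if i = 3 then fst v else snd v)" for i
      have e: "c 2 * (P 2 j - P 1 j) + c 3 * (P 3 j - P 1 j) + c 4 * (P 4 j - P 1 j) = L v j" for j
        by (simp add: L_def c_def algebra_simps)
      have "\<forall>j. c 2 * (P 2 j - P 1 j) + c 3 * (P 3 j - P 1 j) + c 4 * (P 4 j - P 1 j) = 0"
        using that e by simp
      from gp_alt[OF gp this] show ?thesis by (simp add: prod_eq_iff c_def)
    qed
  qed
  moreover have "{v. \<forall>j. Qm P {2,3,4} (m v) j \<ge> 0} \<subseteq> {v. \<forall>j. \<bar>L v j\<bar> \<le> 1}"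
  proof (safe)
    fix v j assume h: "\<forall>j. Qm P {2,3,4} (m v) j \<ge> 0"
    have "Qm P {2,3,4} (m v) j \<le> 1"
      by (rule Qm_le1) (use Ppos h in \<open>auto simp: m_def\<close>)
    moreover have "P 2 j > 0" "P 2 j \<le> 1" using Ppos os_pos os_le1 by auto
    ultimately show "\<bar>L v j\<bar> \<le> 1" using QL[of v j] spec[OF h, of j] by (auto simp: abs_le_iff)
  qed
  ultimately show "bounded {v. \<forall>j. Qm P {2,3,4} (m v) j \<ge> 0}" by (rule bounded_subset)
qed (use Ppos in auto)

lemma exist2:
  fixes P :: "nat \<Rightarrow> 'a::finite \<Rightarrow> real"
  assumes Ppos: "\<forall>i\<in>{2,4}. P i \<in> open_simplex" and gp: "general_position P 4"
  shows "\<exists>\<mu>. (\<Sum>i\<in>{2,4}. \<mu> i) = 1 \<and> Qm P {2,4} \<mu> \<in> open_simplex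
    \<and> (\<forall>i\<in>{2,4}. \<forall>k\<in>{2,4}. KL (P i) (Qm P {2,4} \<mu>) = KL (P k) (Qm P {2,4} \<mu>))"
proof (rule exist_eq)
  define m :: "real \<Rightarrow> nat \<Rightarrow> real" where
    "m v i = (if i = 2 then 1 - v else if i = 4 then v else 0)" for v i
  show "\<forall>i\<in>{2,4}. continuous_on UNIV (\<lambda>v. m v i)"
    unfolding m_def by (auto intro!: continuous_intros)
  show "\<forall>\<mu>. (\<Sum>i\<in>{2,4}. \<mu> i) = 1 \<longrightarrow> (\<exists>v. \<forall>i\<in>{2,4}. m v i = \<mu> i)"
  proof (intro allI impI)
    fix \<mu> :: "nat \<Rightarrow> real" assume "(\<Sum>i\<in>{2,4}. \<mu> i) = 1"
    then show "\<exists>v. \<forall>i\<in>{2,4}. m v i = \<mu> i"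
      by (intro exI[of _ "\<mu> 4"]) (auto simp: m_def)
  qed
  show "\<forall>v. (\<Sum>i\<in>{2,4}. m v i) = 1" by (simp add: m_def)
  define L where "L v j = v * (P 4 j - P 2 j)" for v :: real and j
  have QL: "Qm P {2,4} (m v) j = P 2 j + L v j" for v j
    by (simp add: Qm_def m_def L_def algebra_simps)
  have "bounded {v. \<forall>j. \<bar>L v j\<bar> \<le> 1}"
  proof (rule bounded_lin)
    show "L (u + w) j = L u j + L w j" for u w j by (simp add: L_def algebra_simps)
    show "L (r *\<^sub>R u) j = r * L u j" for r u j by (simp add: L_def algebra_simps)
    show "v = 0" if "\<forall>j. L v j = 0" for v
    proof -
      define c :: "nat \<Rightarrow> real" where "c i = (if i = 2 then - v else if i = 3 then 0 else v)" for i
      have e: "c 2 * (P 2 j - P 1 j) + c 3 * (P 3 j - P 1 j) + c 4 * (P 4 j - P 1 j) = L v j" for j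
        by (simp add: L_def c_def algebra_simps)
      have "\<forall>j. c 2 * (P 2 j - P 1 j) + c 3 * (P 3 j - P 1 j) + c 4 * (P 4 j - P 1 j) = 0"
        using that e by simp
      from gp_alt[OF gp this] show ?thesis by (simp add: c_def)
    qed
  qed
  moreover have "{v. \<forall>j. Qm P {2,4} (m v) j \<ge> 0} \<subseteq> {v. \<forall>j. \<bar>L v j\<bar> \<le> 1}"
  proof (safe)
    fix v j assume h: "\<forall>j. Qm P {2,4} (m v) j \<ge> 0"
    have "Qm P {2,4} (m v) j \<le> 1"
      by (rule Qm_le1) (use Ppos h in \<open>auto simp: m_def\<close>)
    moreover have "P 2 j > 0" "P 2 j \<le> 1" using Ppos os_pos os_le1 by auto
    ultimately show "\<bar>L v j\<bar> \<le> 1" using QL[of v j] spec[OF h, of j] by (auto simp: abs_le_iff)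
  qed
  ultimately show "bounded {v. \<forall>j. Qm P {2,4} (m v) j \<ge> 0}" by (rule bounded_subset)
qed (use Ppos in auto)

lemma affL_iff: "Q \<in> affL P I \<longleftrightarrow> (\<exists>l. (\<Sum>i\<in>I. l i) = 1 \<and> Q = Qm P I l) \<and> Q \<in> open_simplex"
  unfolding affL_def Qm_def by auto

lemma wsum_const:
  assumes "(\<Sum>i\<in>I. l i) = 1" "\<forall>i\<in>I. f i = (c::real)"
  shows "(\<Sum>i\<in>I. l i * f i) = c"
proof -
  have "(\<Sum>i\<in>I. l i * f i) = (\<Sum>i\<in>I. l i * c)" using assms(2) by (auto intro!: sum.cong)
  also have "\<dots> = c" using assms(1) by (simp add: sum_distrib_right[symmetric])
  finally show ?thesis .
qed

lemma KL_nonneg_os: "Q \<in> open_simplex \<Longrightarrow> R \<in> open_simplex \<Longrightarrow> KL Q R \<ge> 0"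
  by (rule KL_nonneg) (auto simp: os_sum less_imp_le os_pos)

lemma KL_zero_os: "Q \<in> open_simplex \<Longrightarrow> R \<in> open_simplex \<Longrightarrow> KL Q R = 0 \<Longrightarrow> Q = R"
  by (rule KL_zero) (auto simp: os_sum os_pos)

lemma uniq_eq:
  assumes Ppos: "\<forall>i\<in>I. P i \<in> open_simplex" and i0: "i0 \<in> I"
    and Q: "Q \<in> affL P I" "\<forall>i\<in>I. \<forall>k\<in>I. KL (P i) Q = KL (P k) Q"
    and Q': "Q' \<in> affL P I" "\<forall>i\<in>I. \<forall>k\<in>I. KL (P i) Q' = KL (P k) Q'"
  shows "Q' = Q"
proof -
  obtain l where l: "(\<Sum>i\<in>I. l i) = 1" "Q = Qm P I l" and Qo: "Q \<in> open_simplex"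
    using Q(1) unfolding affL_iff by blast
  obtain l' where l': "(\<Sum>i\<in>I. l' i) = 1" "Q' = Qm P I l'" and Q'o: "Q' \<in> open_simplex"
    using Q'(1) unfolding affL_iff by blast
  have Qp: "\<forall>j. Q j > 0" and Q'p: "\<forall>j. Q' j > 0" using Qo Q'o os_pos by auto
  have t1: "(\<Sum>i\<in>I. l' i * KL (P i) Q) = (\<Sum>i\<in>I. l' i * KL (P i) Q') + KL Q' Q"
    using tangent[OF Ppos Qp, of l'] Q'p l'(2) by simp
  have t2: "(\<Sum>i\<in>I. l i * KL (P i) Q') = (\<Sum>i\<in>I. l i * KL (P i) Q) + KL Q Q'"
    using tangent[OF Ppos Q'p, of l] Qp l(2) by simp
  have e1: "(\<Sum>i\<in>I. l' i * KL (P i) Q) = KL (P i0) Q" by (rule wsum_const[OF l'(1)]) (use Q(2) i0 in blast)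
  have e2: "(\<Sum>i\<in>I. l' i * KL (P i) Q') = KL (P i0) Q'" by (rule wsum_const[OF l'(1)]) (use Q'(2) i0 in blast)
  have e3: "(\<Sum>i\<in>I. l i * KL (P i) Q) = KL (P i0) Q" by (rule wsum_const[OF l(1)]) (use Q(2) i0 in blast)
  have e4: "(\<Sum>i\<in>I. l i * KL (P i) Q') = KL (P i0) Q'" by (rule wsum_const[OF l(1)]) (use Q'(2) i0 in blast)
  have k1: "KL Q' Q \<ge> 0" by (rule KL_nonneg_os[OF Q'o Qo])
  have k2: "KL Q Q' \<ge> 0" by (rule KL_nonneg_os[OF Qo Q'o])
  have "KL Q' Q = 0" using t1 t2 e1 e2 e3 e4 k1 k2 by linarith
  then show ?thesis by (rule KL_zero_os[OF Q'o Qo])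
qed

lemma proj_char:
  assumes Ppos: "\<forall>i\<in>I. P i \<in> open_simplex" and i0: "i0 \<in> I"
    and Q0: "Q0 \<in> open_simplex" "\<forall>i\<in>I. \<forall>k\<in>I. KL (P i) Q0 = KL (P k) Q0"
    and E: "E \<in> affL P I" "\<forall>i\<in>I. \<forall>k\<in>I. KL (P i) E = KL (P k) E"
  shows "Iproj (affL P I) Q0 = E"
proof -
  have Q0p: "\<forall>j. Q0 j > 0" using Q0 os_pos by auto
  have Ep: "\<forall>j. E j > 0" using E(1) os_pos unfolding affL_iff by auto
  have key: "KL R Q0 = (KL (P i0) Q0 - KL (P i0) E) + KL R E" if R: "R \<in> affL P I" for R
  proof -
    obtain l where l: "(\<Sum>i\<in>I. l i) = 1" "R = Qm P I l" and Ro: "R \<in> open_simplex"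
      using R unfolding affL_iff by blast
    have Rp: "\<forall>j. Qm P I l j > 0" using Ro os_pos l(2) by auto
    have t1: "(\<Sum>i\<in>I. l i * KL (P i) Q0) = (\<Sum>i\<in>I. l i * KL (P i) R) + KL R Q0"
      using tangent[OF Ppos Q0p Rp] l(2) by simp
    have t2: "(\<Sum>i\<in>I. l i * KL (P i) E) = (\<Sum>i\<in>I. l i * KL (P i) R) + KL R E"
      using tangent[OF Ppos Ep Rp] l(2) by simp
    have e1: "(\<Sum>i\<in>I. l i * KL (P i) Q0) = KL (P i0) Q0" by (rule wsum_const[OF l(1)]) (use Q0(2) i0 in blast)
    have e2: "(\<Sum>i\<in>I. l i * KL (P i) E) = KL (P i0) E" by (rule wsum_const[OF l(1)]) (use E(2) i0 in blast)
    show ?thesis using t1 t2 e1 e2 by linarith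
  qed
  have nn: "KL R E \<ge> 0" if "R \<in> affL P I" for R
    by (rule KL_nonneg_os) (use that E(1) in \<open>auto simp: affL_iff\<close>)
  show ?thesis unfolding Iproj_def
  proof (rule the_equality)
    show "E \<in> affL P I \<and> (\<forall>R\<in>affL P I. KL E Q0 \<le> KL R Q0)"
      using E(1) key nn KL_self[of E] by fastforce
  next
    fix Q assume h: "Q \<in> affL P I \<and> (\<forall>R\<in>affL P I. KL Q Q0 \<le> KL R Q0)"
    then have "KL Q Q0 \<le> KL E Q0" using E(1) by blast
    then have "KL Q E \<le> 0" using key[of Q] key[of E] h E(1) KL_self[of E] by simp
    then have "KL Q E = 0" using nn[of Q] h by simp
    then show "Q = E" by (rule KL_zero_os[rotated 2]) (use h E(1) in \<open>auto simp: affL_iff\<close>)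
  qed
qed

lemma bary_eq:
  fixes P :: "nat \<Rightarrow> 'a::finite \<Rightarrow> real"
  assumes gp: "general_position P 4" and l: "\<forall>i. i \<notin> {1..4} \<longrightarrow> l i = 0" "(\<Sum>i\<in>{1..4}. l i) = 1"
    and Q: "Q = Qm P {1..4} l"
  shows "bary P {1..4} Q = l"
  unfolding bary_def
proof (rule the_equality)
  show "(\<forall>i. i \<notin> {1..4} \<longrightarrow> l i = 0) \<and> (\<Sum>i\<in>{1..4}. l i) = 1 \<and> Q = (\<lambda>j. \<Sum>i\<in>{1..4}. l i * P i j)"
    using l Q unfolding Qm_def by blast
next
  fix l' assume h: "(\<forall>i. i \<notin> {1..4} \<longrightarrow> l' i = 0) \<and> (\<Sum>i\<in>{1..4}. l' i) = 1 \<and> Q = (\<lambda>j. \<Sum>i\<in>{1..4::nat}. l' i * P i j)"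
  define c where "c i = l' i - l i" for i
  have s: "c 1 + c 2 + c 3 + c 4 = 0" using h l(2) unfolding c_def I14 by simp
  have "(\<lambda>j. \<Sum>i\<in>{1..4::nat}. l' i * P i j) = (\<lambda>j. \<Sum>i\<in>{1..4}. l i * P i j)"
    using h Q unfolding Qm_def by simp
  then have e: "\<forall>j. c 1 * P 1 j + c 2 * P 2 j + c 3 * P 3 j + c 4 * P 4 j = 0"
    unfolding c_def I14 fun_eq_iff by (simp add: algebra_simps)
  have "\<forall>j. c 2 * (P 2 j - P 1 j) + c 3 * (P 3 j - P 1 j) + c 4 * (P 4 j - P 1 j) = 0"
  proof
    fix j
    have "c 2 * (P 2 j - P 1 j) + c 3 * (P 3 j - P 1 j) + c 4 * (P 4 j - P 1 j)
       = (c 1 * P 1 j + c 2 * P 2 j + c 3 * P 3 j + c 4 * P 4 j) - (c 1 + c 2 + c 3 + c 4) * P 1 j"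
      by (simp add: algebra_simps)
    then show "c 2 * (P 2 j - P 1 j) + c 3 * (P 3 j - P 1 j) + c 4 * (P 4 j - P 1 j) = 0"
      using e[rule_format, of j] s by simp
  qed
  from gp_alt[OF gp this] s have "c 1 = 0 \<and> c 2 = 0 \<and> c 3 = 0 \<and> c 4 = 0" by simp
  then have "\<forall>i\<in>{1..4}. l' i = l i" unfolding c_def I14 by auto
  then show "l' = l" using h l(1) by (metis ext)
qed

lemma mono_term:
  assumes "(x::real) > 0" "y > 0" "(x - y) * a \<le> 0"
  shows "a * ln x \<le> a * ln y"
proof (cases "a > 0")
  case True
  then have "x \<le> y" using assms(3) by (simp add: mult_le_0_iff)
  then show ?thesis using True assms by (simp add: mult_left_mono)
next
  case False
  show ?thesis
  proof (cases "a = 0")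
    case False
    then have "a < 0" using \<open>\<not> a > 0\<close> by simp
    then have "y \<le> x" using assms(3) by (simp add: mult_le_0_iff)
    then show ?thesis using \<open>a < 0\<close> assms by (simp add: mult_left_mono_neg)
  qed simp
qed

lemma eq_sub: "\<forall>i\<in>J. \<forall>k\<in>J. f i = (f k::real) \<Longrightarrow> I \<subseteq> J \<Longrightarrow> \<forall>i\<in>I. \<forall>k\<in>I. f i = f k"
  by blast

theorem theorem22:
  fixes P :: "nat \<Rightarrow> 'a::finite \<Rightarrow> real"
  defines "Q0 \<equiv> equidistant P {1..4}"
      and "Q11 \<equiv> Iproj (affL P {2,3,4}) (equidistant P {1..4})"
      and "Q12 \<equiv> Iproj (affL P {1,3,4}) (equidistant P {1..4})"
      and "Q2d \<equiv> Iproj (affL P {2,4}) (equidistant P {1..4})"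
  assumes rows: "\<forall>i\<in>{1..4}. P i \<in> open_simplex"
      and gp: "general_position P 4"
      and l0: "bary P {1..4} Q0 1 < 0" "bary P {1..4} Q0 2 < 0"
              "bary P {1..4} Q0 3 \<ge> 0" "bary P {1..4} Q0 4 \<ge> 0"
      and l12: "bary P {1..4} Q12 1 < 0"
      and l11: "bary P {1..4} Q11 2 \<ge> 0" "bary P {1..4} Q11 3 < 0"
               "bary P {1..4} Q11 4 \<ge> 0"
  shows "cap_output P 4 = Q2d \<and> capacity P 4 = KL (P 2) Q2d"
proof -
  have Ppos: "\<forall>i\<in>{1,2,3,4}. P i \<in> open_simplex" using rows unfolding I14 .
  have P1: "P 1 \<in> open_simplex" and P2: "P 2 \<in> open_simplex" and P3: "P 3 \<in> open_simplex"
    and P4: "P 4 \<in> open_simplex" using Ppos by auto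
  have Ppos3: "\<forall>i\<in>{2,3,4}. P i \<in> open_simplex" and Ppos2: "\<forall>i\<in>{2,4}. P i \<in> open_simplex"
    using Ppos by auto
  from exist4[OF Ppos gp] obtain \<mu>0 where A0': "(\<Sum>i\<in>{1,2,3,4}. \<mu>0 i) = 1 \<and> Qm P {1,2,3,4} \<mu>0 \<in> open_simplex
    \<and> (\<forall>i\<in>{1,2,3,4}. \<forall>k\<in>{1,2,3,4}. KL (P i) (Qm P {1,2,3,4} \<mu>0) = KL (P k) (Qm P {1,2,3,4} \<mu>0))" ..
  note A0 = conjunct1[OF A0'] conjunct1[OF conjunct2[OF A0']] conjunct2[OF conjunct2[OF A0']]
  from exist3[OF Ppos3 gp] obtain \<mu>1 where A1': "(\<Sum>i\<in>{2,3,4}. \<mu>1 i) = 1 \<and> Qm P {2,3,4} \<mu>1 \<in> open_simplex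
    \<and> (\<forall>i\<in>{2,3,4}. \<forall>k\<in>{2,3,4}. KL (P i) (Qm P {2,3,4} \<mu>1) = KL (P k) (Qm P {2,3,4} \<mu>1))" ..
  note A1 = conjunct1[OF A1'] conjunct1[OF conjunct2[OF A1']] conjunct2[OF conjunct2[OF A1']]
  from exist2[OF Ppos2 gp] obtain \<mu>2 where A2': "(\<Sum>i\<in>{2,4}. \<mu>2 i) = 1 \<and> Qm P {2,4} \<mu>2 \<in> open_simplex
    \<and> (\<forall>i\<in>{2,4}. \<forall>k\<in>{2,4}. KL (P i) (Qm P {2,4} \<mu>2) = KL (P k) (Qm P {2,4} \<mu>2))" ..
  note A2 = conjunct1[OF A2'] conjunct1[OF conjunct2[OF A2']] conjunct2[OF conjunct2[OF A2']]
  define E0 where "E0 = Qm P {1,2,3,4} \<mu>0"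
  define E1 where "E1 = Qm P {2,3,4} \<mu>1"
  define E2 where "E2 = Qm P {2,4} \<mu>2"
  have E0o: "E0 \<in> open_simplex" and E1o: "E1 \<in> open_simplex" and E2o: "E2 \<in> open_simplex"
    unfolding E0_def E1_def E2_def by (rule A0(2), rule A1(2), rule A2(2))
  have E0p: "\<forall>j. E0 j > 0" and E1p: "\<forall>j. E1 j > 0" and E2p: "\<forall>j. E2 j > 0"
    using E0o E1o E2o os_pos by auto
  have E0a: "E0 \<in> affL P {1,2,3,4}" unfolding affL_iff E0_def using A0(1,2) by (intro conjI exI[of _ \<mu>0]) auto
  have E1a: "E1 \<in> affL P {2,3,4}" unfolding affL_iff E1_def using A1(1,2) by (intro conjI exI[of _ \<mu>1]) auto
  have E2a: "E2 \<in> affL P {2,4}" unfolding affL_iff E2_def using A2(1,2) by (intro conjI exI[of _ \<mu>2]) auto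
  have eq0: "\<forall>i\<in>{1,2,3,4}. \<forall>k\<in>{1,2,3,4}. KL (P i) E0 = KL (P k) E0" unfolding E0_def by (rule A0(3))
  have eq1: "\<forall>i\<in>{2,3,4}. \<forall>k\<in>{2,3,4}. KL (P i) E1 = KL (P k) E1" unfolding E1_def by (rule A1(3))
  have eq2: "\<forall>i\<in>{2,4}. \<forall>k\<in>{2,4}. KL (P i) E2 = KL (P k) E2" unfolding E2_def by (rule A2(3))
  have eqQ0: "equidistant P {1..4} = E0"
    unfolding equidistant_def I14
  proof (rule the_equality)
    show "E0 \<in> affL P {1,2,3,4} \<and> (\<forall>i\<in>{1,2,3,4}. \<forall>k\<in>{1,2,3,4}. KL (P i) E0 = KL (P k) E0)"
      by (rule conjI[OF E0a eq0])
    fix Q assume h: "Q \<in> affL P {1,2,3,4} \<and> (\<forall>i\<in>{1,2,3,4}. \<forall>k\<in>{1,2,3,4}. KL (P i) Q = KL (P k) Q)"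
    show "Q = E0" by (rule uniq_eq[OF Ppos _ E0a eq0 conjunct1[OF h] conjunct2[OF h], of 1]) simp
  qed
  have Q0E: "Q0 = E0" unfolding Q0_def by (rule eqQ0)
  have Q11E: "Q11 = E1" unfolding Q11_def eqQ0
    by (rule proj_char[OF Ppos3 _ E0o eq_sub[where f="\<lambda>i. KL (P i) E0", OF eq0] E1a eq1, of 2]) auto
  have Q2dE: "Q2d = E2" unfolding Q2d_def eqQ0
    by (rule proj_char[OF Ppos2 _ E0o eq_sub[where f="\<lambda>i. KL (P i) E0", OF eq0] E2a eq2, of 2]) auto
  define b0 where "b0 i = (if i \<in> {1,2,3,4} then \<mu>0 i else 0)" for i :: nat
  define b1 where "b1 i = (if i \<in> {2,3,4} then \<mu>1 i else 0)" for i :: nat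
  have "bary P {1..4} Q0 = b0"
  proof (rule bary_eq[OF gp])
    show "\<forall>i. i \<notin> {1..4} \<longrightarrow> b0 i = 0" unfolding b0_def I14 by simp
    show "(\<Sum>i\<in>{1..4}. b0 i) = 1" using A0(1) unfolding b0_def I14 by simp
    show "Q0 = Qm P {1..4} b0" unfolding Q0E E0_def I14 by (rule Qm_cong) (simp add: b0_def)
  qed
  then have c0coords: "\<mu>0 1 < 0" "\<mu>0 3 \<ge> 0" using l0 unfolding b0_def by auto
  have "bary P {1..4} Q11 = b1"
  proof (rule bary_eq[OF gp])
    show "\<forall>i. i \<notin> {1..4} \<longrightarrow> b1 i = 0" unfolding b1_def I14 by simp
    show "(\<Sum>i\<in>{1..4}. b1 i) = 1" using A1(1) unfolding b1_def I14 by simp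
    show "Q11 = Qm P {1..4} b1" unfolding Q11E E1_def I14 Qm_def by (simp add: b1_def)
  qed
  then have c1coord: "\<mu>1 3 < 0" using l11 unfolding b1_def by auto
  define u where "u i = KL (P i) E2" for i
  define c where "c = u 2"
  have u4: "u 4 = c" unfolding u_def c_def using eq2 by blast
  define c0 where "c0 = KL (P 1) E0"
  define c11 where "c11 = KL (P 2) E1"
  have E2exp: "E2 j = \<mu>2 2 * P 2 j + \<mu>2 4 * P 4 j" for j unfolding E2_def Qm_def by simp
  have s2: "\<mu>2 2 + \<mu>2 4 = 1" using A2(1) by simp
  have a: "c11 \<ge> c"
  proof -
    define \<nu> where "\<nu> i = (if i = 3 then 0 else \<mu>2 i)" for i :: nat
    have Qn: "Qm P {2,3,4} \<nu> = E2" unfolding Qm_def E2_def \<nu>_def by simp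
    have "(\<Sum>i\<in>{2,3,4}. \<nu> i * KL (P i) E1) = (\<Sum>i\<in>{2,3,4}. \<nu> i * KL (P i) E2) + KL E2 E1"
      using tangent[OF Ppos3 E1p, of \<nu>] Qn E2p by simp
    moreover have "(\<Sum>i\<in>{2,3,4}. \<nu> i * KL (P i) E1) = c11"
    proof (rule wsum_const)
      show "(\<Sum>i\<in>{2,3,4}. \<nu> i) = 1" using s2 unfolding \<nu>_def by simp
      show "\<forall>i\<in>{2,3,4}. KL (P i) E1 = c11" using eq1 unfolding c11_def by blast
    qed
    moreover have "(\<Sum>i\<in>{2,3,4}. \<nu> i * KL (P i) E2) = c"
    proof -
      have "(\<Sum>i\<in>{2,3,4}. \<nu> i * KL (P i) E2) = \<mu>2 2 * u 2 + \<mu>2 4 * u 4"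
        unfolding \<nu>_def u_def by simp
      also have "\<dots> = (\<mu>2 2 + \<mu>2 4) * c" unfolding u4 c_def by (simp add: algebra_simps)
      finally show ?thesis using s2 by simp
    qed
    moreover have "KL E2 E1 \<ge> 0" by (rule KL_nonneg_os[OF E2o E1o])
    ultimately show ?thesis by linarith
  qed
  have b: "u 3 \<le> c"
  proof -
    have "(\<Sum>i\<in>{2,3,4}. \<mu>1 i * KL (P i) E2) = (\<Sum>i\<in>{2,3,4}. \<mu>1 i * KL (P i) E1) + KL E1 E2"
      using tangent[OF Ppos3 E2p, of \<mu>1] E1p E1_def by simp
    moreover have "(\<Sum>i\<in>{2,3,4}. \<mu>1 i * KL (P i) E1) = c11"
      using wsum_const[OF A1(1), of "\<lambda>i. KL (P i) E1" c11] eq1 unfolding c11_def by blast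
    moreover have "(\<Sum>i\<in>{2,3,4}. \<mu>1 i * KL (P i) E2) = \<mu>1 2 * c + \<mu>1 3 * u 3 + \<mu>1 4 * c"
      using u4 unfolding u_def c_def by simp
    moreover have "KL E1 E2 \<ge> 0" by (rule KL_nonneg_os[OF E1o E2o])
    moreover have "\<mu>1 2 * c + \<mu>1 3 * u 3 + \<mu>1 4 * c = c + \<mu>1 3 * (u 3 - c)"
    proof -
      have m: "\<mu>1 2 = 1 - \<mu>1 3 - \<mu>1 4" using A1(1) by simp
      show ?thesis unfolding m by (simp add: algebra_simps)
    qed
    ultimately have "\<mu>1 3 * (u 3 - c) \<ge> 0" using a by linarith
    then show ?thesis using c1coord by (simp add: zero_le_mult_iff)
  qed
  have cc: "c0 \<ge> c"
  proof -
    define \<nu> where "\<nu> i = (if i \<in> {2,4} then \<mu>2 i else 0)" for i :: nat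
    have Qn: "Qm P {1,2,3,4} \<nu> = E2" unfolding Qm_def E2_def \<nu>_def by simp
    have "(\<Sum>i\<in>{1,2,3,4}. \<nu> i * KL (P i) E0) = (\<Sum>i\<in>{1,2,3,4}. \<nu> i * KL (P i) E2) + KL E2 E0"
      using tangent[OF Ppos E0p, of \<nu>] Qn E2p by simp
    moreover have "(\<Sum>i\<in>{1,2,3,4}. \<nu> i * KL (P i) E0) = c0"
    proof -
      have "(\<Sum>i\<in>{1,2,3,4}. \<nu> i) = 1" using s2 unfolding \<nu>_def by simp
      then show ?thesis using wsum_const[of \<nu> "{1,2,3,4}" "\<lambda>i. KL (P i) E0" c0] eq0
        unfolding c0_def by blast
    qed
    moreover have "(\<Sum>i\<in>{1,2,3,4}. \<nu> i * KL (P i) E2) = c"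
    proof -
      have "(\<Sum>i\<in>{1,2,3,4}. \<nu> i * KL (P i) E2) = \<mu>2 2 * u 2 + \<mu>2 4 * u 4"
        unfolding \<nu>_def u_def by simp
      also have "\<dots> = (\<mu>2 2 + \<mu>2 4) * c" unfolding u4 c_def by (simp add: algebra_simps)
      finally show ?thesis using s2 by simp
    qed
    moreover have "KL E2 E0 \<ge> 0" by (rule KL_nonneg_os[OF E2o E0o])
    ultimately show ?thesis by linarith
  qed
  have d: "u 1 \<le> c"
  proof -
    have "(\<Sum>i\<in>{1,2,3,4}. \<mu>0 i * KL (P i) E2) = (\<Sum>i\<in>{1,2,3,4}. \<mu>0 i * KL (P i) E0) + KL E0 E2"
      using tangent[OF Ppos E2p, of \<mu>0] E0p E0_def by simp
    moreover have "(\<Sum>i\<in>{1,2,3,4}. \<mu>0 i * KL (P i) E0) = c0"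
      using wsum_const[OF A0(1), of "\<lambda>i. KL (P i) E0" c0] eq0 unfolding c0_def E0_def by blast
    moreover have "(\<Sum>i\<in>{1,2,3,4}. \<mu>0 i * KL (P i) E2) = \<mu>0 1 * u 1 + \<mu>0 2 * c + \<mu>0 3 * u 3 + \<mu>0 4 * c"
      using u4 unfolding u_def c_def by (simp add: add.assoc)
    moreover have "KL E0 E2 \<ge> 0" by (rule KL_nonneg_os[OF E0o E2o])
    moreover have "\<mu>0 1 * u 1 + \<mu>0 2 * c + \<mu>0 3 * u 3 + \<mu>0 4 * c
        = c + \<mu>0 1 * (u 1 - c) + \<mu>0 3 * (u 3 - c)"
    proof -
      have m: "\<mu>0 2 = 1 - \<mu>0 1 - \<mu>0 3 - \<mu>0 4" using A0(1) by simp
      show ?thesis unfolding m by (simp add: algebra_simps)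
    qed
    ultimately have "\<mu>0 1 * (u 1 - c) + \<mu>0 3 * (u 3 - c) \<ge> 0" using cc by linarith
    moreover have "\<mu>0 3 * (u 3 - c) \<le> 0" using b c0coords by (simp add: mult_nonneg_nonpos)
    ultimately have "\<mu>0 1 * (u 1 - c) \<ge> 0" by linarith
    then show ?thesis using c0coords by (simp add: zero_le_mult_iff)
  qed
  have P24: "P 2 \<noteq> P 4"
  proof
    assume h: "P 2 = P 4"
    define cc :: "nat \<Rightarrow> real" where "cc i = (if i = 2 then 1 else if i = 3 then 0 else -1)" for i
    have "\<forall>j. cc 2 * (P 2 j - P 1 j) + cc 3 * (P 3 j - P 1 j) + cc 4 * (P 4 j - P 1 j) = 0"
      using h by (simp add: cc_def)
    from gp_alt[OF gp this] show False by (simp add: cc_def)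
  qed
  define h where "h Q = (\<Sum>j\<in>UNIV. (P 2 j - P 4 j) * ln (Q j))" for Q :: "'a \<Rightarrow> real"
  have hdiff: "KL (P 2) Q - KL (P 4) Q = cst P 2 - cst P 4 - h Q" if Qp: "\<forall>j. Q j > 0" for Q
  proof -
    have k2: "KL (P 2) Q = cst P 2 - (\<Sum>j\<in>UNIV. P 2 j * ln (Q j))"
      using KL_split[of "P 2" Q] P2 os_pos Qp less_imp_le unfolding cst_def by blast
    have k4: "KL (P 4) Q = cst P 4 - (\<Sum>j\<in>UNIV. P 4 j * ln (Q j))"
      using KL_split[of "P 4" Q] P4 os_pos Qp less_imp_le unfolding cst_def by blast
    have "h Q = (\<Sum>j\<in>UNIV. P 2 j * ln (Q j)) - (\<Sum>j\<in>UNIV. P 4 j * ln (Q j))"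
      unfolding h_def by (simp add: left_diff_distrib sum_subtractf)
    then show ?thesis using k2 k4 by simp
  qed
  have P2p: "\<forall>j. P 2 j > 0" and P4p: "\<forall>j. P 4 j > 0" using P2 P4 os_pos by auto
  have hE2: "h E2 = cst P 2 - cst P 4" using hdiff[OF E2p] u4 unfolding u_def c_def by simp
  have hP4: "h (P 4) = cst P 2 - cst P 4 - KL (P 2) (P 4)" using hdiff[OF P4p] KL_self[of "P 4"] by simp
  have hP2: "h (P 2) = cst P 2 - cst P 4 + KL (P 4) (P 2)" using hdiff[OF P2p] KL_self[of "P 2"] by simp
  have K24: "KL (P 2) (P 4) > 0"
  proof -
    have "KL (P 2) (P 4) \<ge> 0" by (rule KL_nonneg_os[OF P2 P4])
    moreover have "KL (P 2) (P 4) \<noteq> 0" using KL_zero_os[OF P2 P4] P24 by blast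
    ultimately show ?thesis by simp
  qed
  have K42: "KL (P 4) (P 2) > 0"
  proof -
    have "KL (P 4) (P 2) \<ge> 0" by (rule KL_nonneg_os[OF P4 P2])
    moreover have "KL (P 4) (P 2) \<noteq> 0" using KL_zero_os[OF P4 P2] P24 by metis
    ultimately show ?thesis by simp
  qed
  have m4: "\<mu>2 4 = 1 - \<mu>2 2" using s2 by simp
  have pos2: "\<mu>2 2 > 0"
  proof (rule ccontr)
    assume "\<not> \<mu>2 2 > 0"
    then have sn: "\<mu>2 2 \<le> 0" by simp
    have "h E2 \<le> h (P 4)" unfolding h_def
    proof (rule sum_mono)
      fix j
      have "E2 j - P 4 j = \<mu>2 2 * (P 2 j - P 4 j)" unfolding E2exp m4 by (simp add: algebra_simps)
      then have "(E2 j - P 4 j) * (P 2 j - P 4 j) = \<mu>2 2 * ((P 2 j - P 4 j) * (P 2 j - P 4 j))" by simp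
      also have "\<dots> \<le> 0" using sn by (simp add: mult_nonpos_nonneg)
      finally show "(P 2 j - P 4 j) * ln (E2 j) \<le> (P 2 j - P 4 j) * ln (P 4 j)"
        by (rule mono_term[OF spec[OF E2p] spec[OF P4p]])
    qed
    then show False using hE2 hP4 K24 by simp
  qed
  have lt1: "\<mu>2 2 < 1"
  proof (rule ccontr)
    assume "\<not> \<mu>2 2 < 1"
    then have sn: "1 - \<mu>2 2 \<le> 0" by simp
    have "h (P 2) \<le> h E2" unfolding h_def
    proof (rule sum_mono)
      fix j
      have "P 2 j - E2 j = (1 - \<mu>2 2) * (P 2 j - P 4 j)" unfolding E2exp m4 by (simp add: algebra_simps)
      then have "(P 2 j - E2 j) * (P 2 j - P 4 j) = (1 - \<mu>2 2) * ((P 2 j - P 4 j) * (P 2 j - P 4 j))" by simp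
      also have "\<dots> \<le> 0" using sn by (simp add: mult_nonpos_nonneg)
      finally show "(P 2 j - P 4 j) * ln (P 2 j) \<le> (P 2 j - P 4 j) * ln (E2 j)"
        by (rule mono_term[OF spec[OF P2p] spec[OF E2p]])
    qed
    then show False using hE2 hP2 K42 by simp
  qed
  define lam where "lam i = (if i = 2 then \<mu>2 2 else if i = 4 then \<mu>2 4 else 0)" for i :: nat
  have cs_iff: "l \<in> closed_simplex 4 \<longleftrightarrow> (l 1 \<ge> 0 \<and> l 2 \<ge> 0 \<and> l 3 \<ge> 0 \<and> l 4 \<ge> 0) \<and> l 1 + l 2 + l 3 + l 4 = 1"
    for l :: "nat \<Rightarrow> real"
    unfolding closed_simplex_def I14 by (simp add: add.assoc)
  have lamcs: "lam \<in> closed_simplex 4" using pos2 lt1 s2 unfolding cs_iff lam_def by simp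
  have outQ: "out_dist P 4 l = Qm P {1,2,3,4} l" for l unfolding out_dist_def Qm_def I14 ..
  have MI: "mutual_info P 4 l = (\<Sum>i\<in>{1,2,3,4}. l i * KL (P i) (Qm P {1,2,3,4} l))" for l
    unfolding mutual_info_def KL_def outQ I14 by (simp add: sum_distrib_left mult.assoc)
  have outlam: "Qm P {1,2,3,4} lam = E2" unfolding Qm_def E2_def lam_def by simp
  have MIlam: "mutual_info P 4 lam = c"
  proof -
    have "mutual_info P 4 lam = \<mu>2 2 * u 2 + \<mu>2 4 * u 4" unfolding MI outlam lam_def u_def by simp
    also have "\<dots> = (\<mu>2 2 + \<mu>2 4) * c" unfolding u4 c_def by (simp add: algebra_simps)
    finally show ?thesis using s2 by simp
  qed
  have Qlo: "Qm P {1,2,3,4} l \<in> open_simplex" if l: "l \<in> closed_simplex 4" for l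
  proof -
    have lnn: "l 1 \<ge> 0" "l 2 \<ge> 0" "l 3 \<ge> 0" "l 4 \<ge> 0" and ls: "l 1 + l 2 + l 3 + l 4 = 1"
      using l unfolding cs_iff by auto
    have "Qm P {1,2,3,4} l j > 0" for j
    proof -
      define m where "m = min (min (P 1 j) (P 2 j)) (min (P 3 j) (P 4 j))"
      have mp: "m > 0" unfolding m_def using os_pos[OF P1] os_pos[OF P2] os_pos[OF P3] os_pos[OF P4] by simp
      have "l 1 * m \<le> l 1 * P 1 j" "l 2 * m \<le> l 2 * P 2 j" "l 3 * m \<le> l 3 * P 3 j" "l 4 * m \<le> l 4 * P 4 j"
        using lnn unfolding m_def by (auto intro!: mult_left_mono)
      moreover have "(l 1 + l 2 + l 3 + l 4) * m = m" using ls by simp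
      moreover have "Qm P {1,2,3,4} l j = l 1 * P 1 j + l 2 * P 2 j + l 3 * P 3 j + l 4 * P 4 j"
        unfolding Qm_def by (simp add: add.assoc)
      ultimately show ?thesis using mp by (simp add: algebra_simps)
    qed
    moreover have "sum (Qm P {1,2,3,4} l) UNIV = 1" using sum_Qm[OF Ppos] ls by (simp add: add.assoc)
    ultimately show ?thesis unfolding open_simplex_def by blast
  qed
  have bound: "mutual_info P 4 l + KL (Qm P {1,2,3,4} l) E2 \<le> c" if l: "l \<in> closed_simplex 4" for l
  proof -
    have lnn: "l 1 \<ge> 0" "l 2 \<ge> 0" "l 3 \<ge> 0" "l 4 \<ge> 0" and ls: "l 1 + l 2 + l 3 + l 4 = 1"
      using l unfolding cs_iff by auto
    have Qp: "\<forall>j. Qm P {1,2,3,4} l j > 0" using Qlo[OF l] os_pos by auto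
    have "(\<Sum>i\<in>{1,2,3,4}. l i * KL (P i) E2) = mutual_info P 4 l + KL (Qm P {1,2,3,4} l) E2"
      unfolding MI by (rule tangent[OF Ppos E2p Qp])
    moreover have "(\<Sum>i\<in>{1,2,3,4}. l i * KL (P i) E2) = l 1 * u 1 + l 2 * c + l 3 * u 3 + l 4 * c"
      using u4 unfolding u_def c_def by (simp add: add.assoc)
    moreover have "l 1 * u 1 \<le> l 1 * c" using lnn d by (simp add: mult_left_mono)
    moreover have "l 3 * u 3 \<le> l 3 * c" using lnn b by (simp add: mult_left_mono)
    moreover have "(l 1 + l 2 + l 3 + l 4) * c = c" using ls by simp
    ultimately show ?thesis by (simp add: algebra_simps)
  qed
  have KLl: "KL (Qm P {1,2,3,4} l) E2 \<ge> 0" if "l \<in> closed_simplex 4" for l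
    by (rule KL_nonneg_os[OF Qlo[OF that] E2o])
  have cap: "capacity P 4 = c"
    unfolding capacity_def
  proof (rule cSup_eq_maximum)
    show "c \<in> mutual_info P 4 ` closed_simplex 4" using lamcs MIlam by (metis image_eqI)
    fix x assume "x \<in> mutual_info P 4 ` closed_simplex 4"
    then obtain l where l: "l \<in> closed_simplex 4" "x = mutual_info P 4 l" by blast
    then show "x \<le> c" using bound[OF l(1)] KLl[OF l(1)] by simp
  qed
  have capo: "cap_output P 4 = E2"
    unfolding cap_output_def
  proof (rule the_equality)
    show "\<exists>l\<in>closed_simplex 4. mutual_info P 4 l = capacity P 4 \<and> E2 = out_dist P 4 l"
      using lamcs MIlam cap outlam outQ by metis
    fix Q assume "\<exists>l\<in>closed_simplex 4. mutual_info P 4 l = capacity P 4 \<and> Q = out_dist P 4 l"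
    then obtain l where l: "l \<in> closed_simplex 4" "mutual_info P 4 l = c" "Q = Qm P {1,2,3,4} l"
      using cap outQ by metis
    have "KL (Qm P {1,2,3,4} l) E2 = 0" using bound[OF l(1)] KLl[OF l(1)] l(2) by simp
    then have "Qm P {1,2,3,4} l = E2" by (rule KL_zero_os[OF Qlo[OF l(1)] E2o])
    then show "Q = E2" using l(3) by simp
  qed
  show ?thesis using capo cap Q2dE unfolding c_def u_def by simp
qed

end
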